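(* Let $A$ be a meet-complemented lattice in which $\Box x$ and $\Diamond x$ exist for every $x\in A$. Then for every $a\in A$: (i) $\Diamond a\le\neg\Box\neg a$; (ii) $\neg\Diamond a=\Box\neg a$; (iii) $\neg\neg\Diamond a=\neg\Box\neg a$; (iv) $\Box\neg\neg a=\neg\Diamond\neg a$; (v) $\Diamond\neg a\le\neg\Box a$; (vi) $\Box a\le\neg\Diamond\neg a$; (vii) $\neg\Diamond\neg a\le\Box\Diamond a$; (viii) $\Box\neg a\le\neg\Box\Diamond a$; (ix) $\Box\Diamond a\le\neg\Box\neg a$; (x) $\Diamond\neg\Box\neg a=\Diamond\Diamond a$.
   Context: A meet-complemented lattice is a lattice $(L,\le)$ (not necessarily distributive) such that for every $a\in L$ the element $\neg a=\max\{b\in L: a\wedge b\le c\ \text{for all } c\in L\}$ exists; it is bounded with bottom $0$ and top $1$. For $a\in L$, $\Box a=\max\{b\in L: a\vee\neg b=1\}$ and $\Diamond a=\min\{b\in L: \neg a\vee b=1\}$. *)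

theory Defs
  imports Main
begin

definition is_max :: "'a::order set \<Rightarrow> 'a \<Rightarrow> bool" where
  "is_max S m \<longleftrightarrow> m \<in> S \<and> (\<forall>x\<in>S. x \<le> m)"

definition is_min :: "'a::order set \<Rightarrow> 'a \<Rightarrow> bool" where
  "is_min S m \<longleftrightarrow> m \<in> S \<and> (\<forall>x\<in>S. m \<le> x)"

definition neg :: "'a::bounded_lattice \<Rightarrow> 'a" where
  "neg a = (THE m. is_max {b. \<forall>c. inf a b \<le> c} m)"

definition meet_complemented :: "'a::bounded_lattice itself \<Rightarrow> bool" where
  "meet_complemented _ \<longleftrightarrow> (\<forall>a::'a. \<exists>m. is_max {b. \<forall>c. inf a b \<le> c} m)"

definition box :: "'a::bounded_lattice \<Rightarrow> 'a" where
  "box a = (THE m. is_max {b. sup a (neg b) = top} m)"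

definition diamond :: "'a::bounded_lattice \<Rightarrow> 'a" where
  "diamond a = (THE m. is_min {b. sup (neg a) b = top} m)"

end

theory Submission
  imports Defs
begin

lemma is_max_unique: "is_max S m \<Longrightarrow> is_max S m' \<Longrightarrow> m = m'"
  unfolding is_max_def by (meson order_antisym)

lemma is_min_unique: "is_min S m \<Longrightarrow> is_min S m' \<Longrightarrow> m = m'"
  unfolding is_min_def by (meson order_antisym)

lemma the_max: "\<exists>m. is_max S m \<Longrightarrow> is_max S (THE m. is_max S m)"
  by (metis is_max_unique theI)

lemma the_min: "\<exists>m. is_min S m \<Longrightarrow> is_min S (THE m. is_min S m)"
  by (metis is_min_unique theI)

context
  fixes dummy :: "'a::bounded_lattice itself"
  assumes mc: "meet_complemented TYPE('a)"
begin

lemma neg_is_max: "is_max {b. \<forall>c. inf (a::'a) b \<le> c} (neg a)"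
  unfolding neg_def using mc unfolding meet_complemented_def by (blast intro: the_max)

lemma neg_inf: "inf (a::'a) (neg a) = bot"
  using neg_is_max[of a] unfolding is_max_def by (metis bot_unique mem_Collect_eq)

lemma neg_le: "inf (a::'a) b = bot \<Longrightarrow> b \<le> neg a"
proof -
  assume "inf a b = bot"
  hence "b \<in> {b. \<forall>c. inf a b \<le> c}" by (auto intro: bot_least)
  thus ?thesis using neg_is_max[of a] unfolding is_max_def by blast
qed

lemma neg_le_iff: "(b \<le> neg (a::'a)) = (inf a b = bot)"
  by (metis neg_inf neg_le inf_mono order_refl bot_unique)

lemma neg_anti: "(x::'a) \<le> y \<Longrightarrow> neg y \<le> neg x"
  by (metis neg_le_iff inf_mono order_refl bot_unique neg_inf inf_commute)

lemma nn: "(x::'a) \<le> neg (neg x)"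
  by (simp add: neg_le_iff inf_commute neg_inf)

lemma nnn: "neg (neg (neg (x::'a))) = neg x"
  by (simp add: antisym neg_anti nn)

lemma key: "sup (neg (x::'a)) y = top \<Longrightarrow> x \<le> neg (neg y)"
proof -
  assume h: "sup (neg x) y = top"
  define z where "z = inf x (neg y)"
  have "neg x \<le> neg z" unfolding z_def by (simp add: neg_anti)
  moreover have "y \<le> neg z" using nn[of y] unfolding z_def
    by (meson inf_le2 neg_anti order_trans)
  ultimately have "neg z = top" using h by (metis sup_least top_unique)
  hence "z = bot" using neg_inf[of z] by simp
  thus ?thesis unfolding z_def by (simp add: neg_le_iff inf_commute)
qed

end

theorem proposition9:
  fixes a :: "'a::bounded_lattice"
  assumes mc: "meet_complemented TYPE('a)"
    and box_ex: "\<forall>x::'a. \<exists>m. is_max {b. sup x (neg b) = top} m"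
    and dia_ex: "\<forall>x::'a. \<exists>m. is_min {b. sup (neg x) b = top} m"
  shows "(diamond a \<le> neg (box (neg a))) \<and>
         (neg (diamond a) = box (neg a)) \<and>
         (neg (neg (diamond a)) = neg (box (neg a))) \<and>
         (box (neg (neg a)) = neg (diamond (neg a))) \<and>
         (diamond (neg a) \<le> neg (box a)) \<and>
         (box a \<le> neg (diamond (neg a))) \<and>
         (neg (diamond (neg a)) \<le> box (diamond a)) \<and>
         (box (neg a) \<le> neg (box (diamond a))) \<and>
         (box (diamond a) \<le> neg (box (neg a))) \<and>
         (diamond (neg (box (neg a))) = diamond (diamond a))"
proof -
  note N = neg_inf[OF mc] neg_le_iff[OF mc] neg_anti[OF mc] nn[OF mc] nnn[OF mc] key[OF mc]
  have bx: "is_max {b. sup x (neg b) = top} (box x)" for x :: 'a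
    unfolding box_def using box_ex by (blast intro: the_max)
  have dx: "is_min {b. sup (neg x) b = top} (diamond x)" for x :: 'a
    unfolding diamond_def using dia_ex by (blast intro: the_min)
  have box_top: "sup x (neg (box x)) = top" for x :: 'a using bx[of x] unfolding is_max_def by simp
  have box_le: "sup x (neg b) = top \<Longrightarrow> b \<le> box x" for x b :: 'a using bx[of x] unfolding is_max_def by simp
  have dia_top: "sup (neg x) (diamond x) = top" for x :: 'a using dx[of x] unfolding is_min_def by simp
  have dia_le: "sup (neg x) b = top \<Longrightarrow> diamond x \<le> b" for x b :: 'a using dx[of x] unfolding is_min_def by simp
  have sup_top_mono: "sup x y = top \<Longrightarrow> y \<le> z \<Longrightarrow> sup x z = top" for x y z :: 'a
    by (metis sup.mono order_refl top_unique)
  have sup_top_mono1: "sup x y = top \<Longrightarrow> x \<le> z \<Longrightarrow> sup z y = top" for x y z :: 'a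
    by (metis sup.mono order_refl top_unique)
  have ii: "neg (diamond x) = box (neg x)" for x :: 'a
  proof (rule antisym)
    show "neg (diamond x) \<le> box (neg x)"
      by (rule box_le, rule sup_top_mono[OF dia_top N(4)])
    have "diamond x \<le> neg (box (neg x))" by (rule dia_le, rule box_top)
    thus "box (neg x) \<le> neg (diamond x)"
      by (metis N(3) N(4) order_trans)
  qed
  have dnn: "diamond (neg (neg y)) = diamond y" for y :: 'a
    unfolding diamond_def using N(5) by simp
  have v: "diamond (neg a) \<le> neg (box a)"
    by (rule dia_le, rule sup_top_mono1[OF box_top N(4)])
  have vii: "neg (diamond (neg a)) \<le> box (diamond a)"
  proof (rule box_le)
    have "neg a \<le> neg (neg (diamond (neg a)))" by (rule N(6), rule dia_top)
    thus "sup (diamond a) (neg (neg (diamond (neg a)))) = top"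
      using dia_top[of a] by (metis sup_commute sup_top_mono)
  qed
  have c1: "box (diamond a) \<le> neg (neg (diamond a))"
    by (rule N(6), metis box_top sup_commute)
  have ix: "box (diamond a) \<le> neg (box (neg a))" using c1 ii by simp
  have viii: "box (neg a) \<le> neg (box (diamond a))"
    using c1 ii N(2) by (metis inf_commute)
  show ?thesis
    using ii[of a] ii[of "neg a"] v vii viii ix
    by (metis N(3) N(4) dnn order_trans)
qed

end
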